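(* Let $K$ be a fan-like simplicial sphere of dimension $n-1$ with at most $n+3$ vertices. Then any real topological toric manifold over $K$ can be realized as the fixed point set of the conjugation of a topological toric manifold. Equivalently, for every non-singular characteristic map $\lambda:V(K)\to\mathbb{Z}_2^n$ over $\mathbb{Z}_2$ there is a non-singular characteristic map $\widetilde\lambda:V(K)\to\mathbb{Z}^n$ whose reduction modulo $2$ is $\lambda$.
   Context: A simplicial $(n-1)$-sphere $K$ is fan-like if it underlies a complete simplicial fan in $\mathbb{R}^n$. A characteristic map over $\mathbb{Z}_2$, $\lambda:V(K)\to\mathbb{Z}_2^n$, is non-singular if the vectors on every face of $K$ are linearly independent over $\mathbb{Z}_2$; a characteristic map $\widetilde\lambda:V(K)\to\mathbb{Z}^n$ is non-singular if the vectors on every face are part of a $\mathbb{Z}$-basis of $\mathbb{Z}^n$. Topological toric manifolds (as $T^n$-manifolds, with omniorientation) over $K$ correspond to complete non-singular characteristic maps over $\mathbb{Z}$ on $K$, real topological toric manifolds over $K$ correspond to non-singular characteristic maps over $\mathbb{Z}_2$ on $K$, and the fixed point set of the conjugation on the topological toric manifold of $\widetilde\lambda$ is the real topological toric manifold of the mod $2$ reduction of $\widetilde\lambda$. *)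

theory Defs
  imports "HOL-Analysis.Analysis" "HOL-Library.Z2"
begin

definition simplicial_complex :: "'a set \<Rightarrow> 'a set set \<Rightarrow> bool" where
  "simplicial_complex V K \<longleftrightarrow> finite V \<and> (\<forall>\<sigma>\<in>K. \<sigma> \<subseteq> V) \<and>
     (\<forall>\<sigma>\<in>K. \<forall>\<tau>. \<tau> \<subseteq> \<sigma> \<longrightarrow> \<tau> \<in> K) \<and> (\<forall>v\<in>V. {v} \<in> K)"

definition face_cone :: "('a \<Rightarrow> real ^ 'n) \<Rightarrow> 'a set \<Rightarrow> (real ^ 'n) set" where
  "face_cone w \<sigma> = {x. \<exists>c. (\<forall>v\<in>\<sigma>. c v \<ge> 0) \<and> x = (\<Sum>v\<in>\<sigma>. c v *\<^sub>R w v)}"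

text \<open>K underlies a complete simplicial fan in R^n (n = CARD('n)): there are ray vectors
  w(v), linearly independent on each face, whose face cones meet in common faces and cover R^n.\<close>
definition fan_like :: "'a set \<Rightarrow> 'a set set \<Rightarrow> ('a \<Rightarrow> real ^ 'n) \<Rightarrow> bool" where
  "fan_like V K w \<longleftrightarrow> simplicial_complex V K \<and>
     (\<forall>\<sigma>\<in>K. inj_on w \<sigma> \<and> independent (w ` \<sigma>)) \<and>
     (\<forall>\<sigma>\<in>K. \<forall>\<tau>\<in>K. face_cone w \<sigma> \<inter> face_cone w \<tau> = face_cone w (\<sigma> \<inter> \<tau>)) \<and>
     (\<Union>\<sigma>\<in>K. face_cone w \<sigma>) = UNIV"

definition fan_like_sphere :: "'a set \<Rightarrow> 'a set set \<Rightarrow> 'n::finite itself \<Rightarrow> bool" where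
  "fan_like_sphere V K _ \<longleftrightarrow> (\<exists>w :: 'a \<Rightarrow> real ^ 'n. fan_like V K w)"

definition nonsingular_Z2 :: "'a set set \<Rightarrow> ('a \<Rightarrow> bit ^ 'n) \<Rightarrow> bool" where
  "nonsingular_Z2 K lam \<longleftrightarrow> (\<forall>\<sigma>\<in>K. \<forall>c :: 'a \<Rightarrow> bit.
      (\<Sum>v\<in>\<sigma>. c v *s lam v) = 0 \<longrightarrow> (\<forall>v\<in>\<sigma>. c v = 0))"

definition Z_basis :: "('n::finite \<Rightarrow> int ^ 'n) \<Rightarrow> bool" where
  "Z_basis b \<longleftrightarrow> (\<forall>x :: int ^ 'n. \<exists>!c :: 'n \<Rightarrow> int. x = (\<Sum>i\<in>UNIV. c i *s b i))"

definition nonsingular_Z :: "'a set set \<Rightarrow> ('a \<Rightarrow> int ^ 'n::finite) \<Rightarrow> bool" where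
  "nonsingular_Z K lam \<longleftrightarrow> (\<forall>\<sigma>\<in>K. \<exists>b :: 'n \<Rightarrow> int ^ 'n. \<exists>f :: 'a \<Rightarrow> 'n.
      Z_basis b \<and> inj_on f \<sigma> \<and> (\<forall>v\<in>\<sigma>. b (f v) = lam v))"

definition mod2_reduction :: "int ^ 'n \<Rightarrow> bit ^ 'n" where
  "mod2_reduction x = (\<chi> i. of_int (x $ i))"

end

theory Submission
  imports Defs
begin

lemma of_int_bit: "(of_int k :: bit) = (if even k then 0 else 1)"
proof -
  obtain q r where "k = 2*q + r" "r = k mod 2" by (metis mult_div_mod_eq add.commute)
  then show ?thesis
    by (cases "even k") (auto simp: even_iff_mod_2_eq_zero odd_iff_mod_2_eq_one)
qed

lemma bit_add_self[simp]: "(x::bit^'n) + x = 0"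
  by (simp add: vec_eq_iff)

lemma fan_big_face:
  fixes w :: "'a \<Rightarrow> real^'n::finite"
  assumes "fan_like V K w"
  shows "\<exists>\<sigma>\<in>K. card \<sigma> \<ge> CARD('n)"
proof (rule ccontr)
  assume "\<not> ?thesis"
  hence small: "\<forall>\<sigma>\<in>K. card \<sigma> < CARD('n)" by auto
  have sc: "simplicial_complex V K" and cov: "(\<Union>\<sigma>\<in>K. face_cone w \<sigma>) = UNIV"
    using assms unfolding fan_like_def by auto
  have finK: "finite K"
  proof -
    have "K \<subseteq> Pow V" using sc unfolding simplicial_complex_def by auto
    moreover have "finite V" using sc unfolding simplicial_complex_def by auto
    ultimately show ?thesis by (meson finite_Pow_iff finite_subset)
  qed
  have "negligible (face_cone w \<sigma>)" if "\<sigma> \<in> K" for \<sigma>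
  proof -
    have fin: "finite \<sigma>" using sc that unfolding simplicial_complex_def
      by (meson finite_subset)
    have "face_cone w \<sigma> \<subseteq> span (w ` \<sigma>)"
      unfolding face_cone_def
      by (auto intro!: span_sum span_scale[OF span_base])
    moreover have "dim (span (w ` \<sigma>)) < DIM(real^'n)"
    proof -
      have "dim (span (w ` \<sigma>)) \<le> card (w ` \<sigma>)" by (simp add: dim_le_card' fin)
      also have "\<dots> \<le> card \<sigma>" by (simp add: card_image_le fin)
      finally show ?thesis using small that by (simp, meson le_less_trans)
    qed
    ultimately show ?thesis using negligible_lowdim negligible_subset by blast
  qed
  hence "negligible (\<Union>\<sigma>\<in>K. face_cone w \<sigma>)" using finK by (intro negligible_Union) auto
  thus False using cov by simp
qed

definition LC :: "('n::finite \<Rightarrow> int^'n) \<Rightarrow> ('n \<Rightarrow> int) \<Rightarrow> int^'n" where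
  "LC b d = (\<Sum>i\<in>UNIV. d i *s b i)"

lemma LC_add: "LC b d + LC b e = LC b (\<lambda>i. d i + e i)"
  unfolding LC_def by (simp add: vec_eq_iff sum.distrib algebra_simps)

lemma LC_diff: "LC b d - LC b e = LC b (\<lambda>i. d i - e i)"
  unfolding LC_def by (simp add: vec_eq_iff sum_subtractf algebra_simps)

lemma LC_smult: "k *s LC b d = LC b (\<lambda>i. k * d i)"
  unfolding LC_def by (simp add: vec_eq_iff sum_distrib_left algebra_simps)

lemma LC_delta: "LC b (\<lambda>i. if i = r then 1 else 0) = b r"
proof -
  have "(\<lambda>i. (if i = r then 1 else 0) *s b i) = (\<lambda>i. if i = r then b r else 0)" by auto
  thus ?thesis unfolding LC_def by (simp only:) simp
qed

lemma LC_upd: "LC (b(r:=v)) d = LC b (d(r:=0)) + d r *s v"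
proof -
  have "LC (b(r:=v)) d = d r *s v + (\<Sum>i\<in>UNIV-{r}. d i *s b i)"
    unfolding LC_def by (subst sum.remove[of _ r]) auto
  moreover have "LC b (d(r:=0)) = (\<Sum>i\<in>UNIV-{r}. d i *s b i)"
    unfolding LC_def by (subst sum.remove[of _ r]) (auto intro!: sum.cong)
  ultimately show ?thesis by (simp add: add.commute)
qed

lemma LC_cong: "(\<And>i. d i = e i) \<Longrightarrow> LC b d = LC b e"
  by (simp add: LC_def)

lemma Z_basis_LC: "Z_basis b \<longleftrightarrow> (\<forall>x. \<exists>!c. x = LC b c)"
  by (simp add: Z_basis_def LC_def)

lemma Z_basis_upd:
  assumes zb: "Z_basis b" and v: "v = LC b c" and cr: "c r = 1 \<or> c r = -1"
  shows "Z_basis (b(r := v))"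
proof -
  have cc: "c r * c r = 1" using cr by auto
  define \<phi> where "\<phi> d = (\<lambda>i. if i = r then d r * c r else d i + d r * c i)" for d
  define \<psi> where "\<psi> d = (\<lambda>i. if i = r then d r * c r else d i - d r * c r * c i)" for d
  have key: "LC (b(r:=v)) d = LC b (\<phi> d)" for d
    unfolding LC_upd v LC_smult LC_add \<phi>_def by (rule LC_cong) auto
  have h: "\<And>x. x * c r * c r = x" using cc by (metis mult.assoc mult.right_neutral)
  have pp: "\<psi> (\<phi> d) = d" for d
    unfolding \<phi>_def \<psi>_def by (auto simp: fun_eq_iff h)
  have pp2: "\<phi> (\<psi> d) = d" for d
    unfolding \<phi>_def \<psi>_def by (auto simp: fun_eq_iff h)
  show ?thesis unfolding Z_basis_LC
  proof
    fix x
    obtain e where e: "x = LC b e" using zb unfolding Z_basis_LC by blast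
    have uq: "\<And>e1 e2. LC b e1 = LC b e2 \<Longrightarrow> e1 = e2"
      using zb unfolding Z_basis_LC by metis
    show "\<exists>!d. x = LC (b(r:=v)) d"
    proof
      show "x = LC (b(r:=v)) (\<psi> e)" using e key pp2 by simp
      fix d assume "x = LC (b(r:=v)) d"
      hence "LC b (\<phi> d) = LC b (\<phi> (\<psi> e))" using e key pp2 by simp
      hence "\<phi> d = \<phi> (\<psi> e)" by (rule uq)
      hence "\<psi> (\<phi> d) = \<psi> (\<phi> (\<psi> e))" by simp
      thus "d = \<psi> e" using pp by simp
    qed
  qed
qed

lemma Z_basis_axis: "Z_basis (\<lambda>i. axis i (1::int) :: int^'n::finite)"
  unfolding Z_basis_LC
proof
  fix x :: "int^'n"
  show "\<exists>!c. x = LC (\<lambda>i. axis i 1) c"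
  proof
    show "x = LC (\<lambda>i. axis i 1) (\<lambda>i. x$i)" unfolding LC_def by (simp add: basis_expansion)
    fix c assume "x = LC (\<lambda>i. axis i 1) c"
    thus "c = (\<lambda>i. x$i)" unfolding LC_def
      by (auto simp: fun_eq_iff axis_def if_distrib cong: if_cong)
  qed
qed

abbreviation red where "red \<equiv> mod2_reduction"

lemma red_add: "red (x + y) = red x + red y"
  by (simp add: mod2_reduction_def vec_eq_iff)

lemma red_smult: "red (k *s x) = of_int k *s red x"
  by (simp add: mod2_reduction_def vec_eq_iff)

lemma red_sum: "red (\<Sum>i\<in>A. f i) = (\<Sum>i\<in>A. red (f i))"
  by (induction A rule: infinite_finite_induct) (auto simp: red_add mod2_reduction_def vec_eq_iff)

lemma red_LC: "red (LC b d) = (\<Sum>i\<in>UNIV. of_int (d i) *s red (b i))"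
  unfolding LC_def red_sum red_smult ..

definition lift :: "bit \<Rightarrow> int" where "lift c = (if c = 0 then 0 else 1)"

lemma of_int_lift[simp]: "of_int (lift c) = c"
  by (simp add: lift_def)

lemma lift_01: "lift c = 0 \<or> lift c = 1" by (simp add: lift_def)

lemma Z2_span:
  assumes "Z_basis b"
  shows "\<exists>c. z = (\<Sum>i\<in>UNIV. c i *s red (b i))"
proof -
  define zz :: "int^_" where "zz = (\<chi> i. lift (z$i))"
  have "red zz = z" by (simp add: zz_def mod2_reduction_def vec_eq_iff)
  obtain d where "zz = LC b d" using assms unfolding Z_basis_LC by blast
  hence "z = (\<Sum>i\<in>UNIV. of_int (d i) *s red (b i))" using \<open>red zz = z\<close> red_LC by metis
  thus ?thesis by (rule exI[where x="\<lambda>i. of_int (d i)"])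
qed

lemma bound3:
  fixes a b c d e f g h :: int
  assumes "a = 0 \<or> a = 1" "b = 0 \<or> b = 1" "c = 0 \<or> c = 1" "d = 0 \<or> d = 1"
     "e = 0 \<or> e = 1" "f = 0 \<or> f = 1" "g = 0 \<or> g = 1" "h = 0 \<or> h = 1"
     "c - b * a = 1 \<or> c - b * a = -1"
  shows "-2 \<le> h - ((c - b*a) * (d*c - b*e)) * f - ((c - b*a) * (e - d*a)) * g
       \<and> h - ((c - b*a) * (d*c - b*e)) * f - ((c - b*a) * (e - d*a)) * g \<le> 2"
  using assms by (elim disjE) simp_all

definition indep2 :: "('a \<Rightarrow> int^'n::finite) \<Rightarrow> 'a set \<Rightarrow> bool" where
  "indep2 \<mu> A \<longleftrightarrow> (\<forall>c::'a\<Rightarrow>bit. (\<Sum>v\<in>A. c v *s red (\<mu> v)) = 0 \<longrightarrow> (\<forall>v\<in>A. c v = 0))"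

lemma indep2_subset:
  assumes "indep2 \<mu> A" "B \<subseteq> A" "finite A"
  shows "indep2 \<mu> B"
  unfolding indep2_def
proof (intro allI impI ballI)
  fix c :: "'a \<Rightarrow> bit" and v
  assume s: "(\<Sum>v\<in>B. c v *s red (\<mu> v)) = 0" and v: "v \<in> B"
  define c' where "c' v = (if v \<in> B then c v else 0)" for v
  have "(\<Sum>v\<in>A. c' v *s red (\<mu> v)) = (\<Sum>v\<in>B. c' v *s red (\<mu> v))"
    using assms by (intro sum.mono_neutral_right) (auto simp: c'_def)
  also have "\<dots> = 0" using s by (simp add: c'_def)
  finally have "c' v = 0" using assms v unfolding indep2_def by blast
  thus "c v = 0" using v by (simp add: c'_def)
qed

lemma pivot:
  assumes fin: "finite P" and inj: "inj_on f P" and bf: "\<forall>v\<in>P. b (f v) = \<mu> v"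
    and t: "t \<notin> P" and ind: "indep2 \<mu> (insert t P)" and mt: "\<mu> t = LC b \<kappa>"
  shows "\<exists>r. r \<notin> f ` P \<and> odd (\<kappa> r)"
proof (rule ccontr)
  assume "\<not> ?thesis"
  hence ev: "\<And>r. r \<notin> f ` P \<Longrightarrow> even (\<kappa> r)" by auto
  have "red (\<mu> t) = (\<Sum>i\<in>UNIV. of_int (\<kappa> i) *s red (b i))" using mt red_LC by metis
  also have "\<dots> = (\<Sum>i\<in>f ` P. of_int (\<kappa> i) *s red (b i))"
    using ev by (intro sum.mono_neutral_right) (auto simp: of_int_bit)
  also have "\<dots> = (\<Sum>v\<in>P. of_int (\<kappa> (f v)) *s red (\<mu> v))"
    using inj bf by (subst sum.reindex) auto
  finally have e1: "red (\<mu> t) = (\<Sum>v\<in>P. of_int (\<kappa> (f v)) *s red (\<mu> v))" .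
  define c where "c v = (if v = t then 1 else of_int (\<kappa> (f v)) :: bit)" for v
  have "(\<Sum>v\<in>insert t P. c v *s red (\<mu> v)) = red (\<mu> t) + (\<Sum>v\<in>P. c v *s red (\<mu> v))"
    using fin t by (simp add: c_def)
  also have "(\<Sum>v\<in>P. c v *s red (\<mu> v)) = (\<Sum>v\<in>P. of_int (\<kappa> (f v)) *s red (\<mu> v))"
    using t by (intro sum.cong) (auto simp: c_def)
  finally have "(\<Sum>v\<in>insert t P. c v *s red (\<mu> v)) = 0" using e1 by simp
  hence "c t = 0" using ind unfolding indep2_def by blast
  thus False by (simp add: c_def)
qed

lemma place:
  assumes zb: "Z_basis b" and fin: "finite P" and inj: "inj_on f P" and bf: "\<forall>v\<in>P. b (f v) = \<mu> v"
    and t: "t \<notin> P" and ind: "indep2 \<mu> (insert t P)" and mt: "\<mu> t = LC b \<kappa>"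
    and bd: "\<And>i. i \<notin> f ` P \<Longrightarrow> -2 \<le> \<kappa> i \<and> \<kappa> i \<le> 2"
  shows "\<exists>r. r \<notin> f ` P \<and> (\<kappa> r = 1 \<or> \<kappa> r = -1) \<and> Z_basis (b(r := \<mu> t))
     \<and> inj_on (f(t := r)) (insert t P) \<and> (\<forall>v\<in>insert t P. (b(r := \<mu> t)) ((f(t:=r)) v) = \<mu> v)"
proof -
  obtain r where r: "r \<notin> f ` P" "odd (\<kappa> r)" using pivot[OF fin inj bf t ind mt] by blast
  have k: "\<kappa> r = 1 \<or> \<kappa> r = -1" using bd[OF r(1)] r(2) by presburger
  have "Z_basis (b(r := \<mu> t))" using Z_basis_upd[OF zb mt k] .
  moreover have "inj_on (f(t := r)) (insert t P)"
    using inj r(1) t by (auto simp: inj_on_def image_iff) 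
  moreover have "\<forall>v\<in>insert t P. (b(r := \<mu> t)) ((f(t:=r)) v) = \<mu> v"
    using bf r(1) t by (auto simp: image_iff)
  ultimately show ?thesis using r k by blast
qed

lemma core:
  fixes B :: "'n::finite \<Rightarrow> int^'n" and x :: "'a \<Rightarrow> 'n \<Rightarrow> int"
  assumes zb: "Z_basis B" and finS: "finite S" and finT: "finite T" and disj: "S \<inter> T = {}"
    and injh: "inj_on h S" and xs: "\<forall>s\<in>S. x s = (\<lambda>i. if i = h s then 1 else 0)"
    and x01: "\<forall>t\<in>T. \<forall>i. x t i = 0 \<or> x t i = 1"
    and cT: "card T \<le> 3"
    and ind: "indep2 (\<lambda>v. LC B (x v)) (S \<union> T)"
  shows "\<exists>b f. Z_basis b \<and> inj_on f (S \<union> T) \<and> (\<forall>v\<in>S\<union>T. b (f v) = LC B (x v))"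
proof -
  define \<mu> where "\<mu> v = LC B (x v)" for v
  have ind': "indep2 \<mu> A" if "A \<subseteq> S \<union> T" for A
    using indep2_subset[OF ind that] finS finT unfolding \<mu>_def by auto
  have st0: "\<forall>v\<in>S. B (h v) = \<mu> v" using xs by (simp add: \<mu>_def LC_delta)
  show ?thesis
  proof (cases "T = {}")
    case True thus ?thesis using zb injh st0 unfolding \<mu>_def by auto
  next
    case False
    then obtain t1 where t1: "t1 \<in> T" by auto
    have t1S: "t1 \<notin> S" using t1 disj by auto
    have x1: "\<forall>i. x t1 i = 0 \<or> x t1 i = 1" using x01 t1 by auto
    obtain r1 where r1: "r1 \<notin> h ` S" "x t1 r1 = 1 \<or> x t1 r1 = -1"
      and zb1: "Z_basis (B(r1 := \<mu> t1))" and inj1: "inj_on (h(t1:=r1)) (insert t1 S)"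
      and st1: "\<forall>v\<in>insert t1 S. (B(r1 := \<mu> t1)) ((h(t1:=r1)) v) = \<mu> v"
    proof -
      have i1: "indep2 \<mu> (insert t1 S)" using ind' t1 by auto
      have m1: "\<mu> t1 = LC B (x t1)" by (simp add: \<mu>_def)
      have bd1: "\<And>i. i \<notin> h ` S \<Longrightarrow> -2 \<le> x t1 i \<and> x t1 i \<le> 2" using x1 by (metis order.refl zero_le_numeral one_le_numeral neg_numeral_le_zero neg_numeral_le_one)
      show ?thesis using place[OF zb finS injh st0 t1S i1 m1 bd1] that by blast
    qed
    have x1r1: "x t1 r1 = 1" using r1(2) x1[rule_format, of r1] by auto
    define b1 where "b1 = B(r1 := \<mu> t1)"
    define f1 where "f1 = h(t1:=r1)"
    show ?thesis
    proof (cases "T - {t1} = {}")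
      case True
      hence "insert t1 S = S \<union> T" using t1 by auto
      thus ?thesis using zb1 inj1 st1 unfolding \<mu>_def by metis
    next
      case False
      then obtain t2 where t2: "t2 \<in> T" "t2 \<noteq> t1" by auto
      have t2S: "t2 \<notin> insert t1 S" using t2 disj by auto
      have x2: "\<forall>i. x t2 i = 0 \<or> x t2 i = 1" using x01 t2 by auto
      define \<kappa>2 where "\<kappa>2 i = (if i = r1 then x t2 r1 else x t2 i - x t2 r1 * x t1 i)" for i
      have m2: "\<mu> t2 = LC b1 \<kappa>2"
      proof -
        have "LC b1 \<kappa>2 = LC B (\<kappa>2(r1:=0)) + \<kappa>2 r1 *s \<mu> t1" unfolding b1_def LC_upd ..
        also have "\<dots> = LC B (\<lambda>i. (\<kappa>2(r1:=0)) i + x t2 r1 * x t1 i)"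
          unfolding \<mu>_def LC_smult LC_add by (simp add: \<kappa>2_def)
        also have "\<dots> = \<mu> t2" unfolding \<mu>_def by (rule LC_cong) (auto simp: \<kappa>2_def x1r1)
        finally show ?thesis ..
      qed
      have bd2: "-2 \<le> \<kappa>2 i \<and> \<kappa>2 i \<le> 2" for i
      proof -
        from x1[rule_format, of i] x2[rule_format, of i] x2[rule_format, of r1]
        show ?thesis unfolding \<kappa>2_def by (elim disjE) simp_all
      qed
      have fin1: "finite (insert t1 S)" using finS by simp
      obtain r2 where r2: "r2 \<notin> f1 ` insert t1 S" "\<kappa>2 r2 = 1 \<or> \<kappa>2 r2 = -1"
        and zb2: "Z_basis (b1(r2 := \<mu> t2))" and inj2: "inj_on (f1(t2:=r2)) (insert t2 (insert t1 S))"
        and st2: "\<forall>v\<in>insert t2 (insert t1 S). (b1(r2 := \<mu> t2)) ((f1(t2:=r2)) v) = \<mu> v"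
      proof -
        have i2: "indep2 \<mu> (insert t2 (insert t1 S))" using ind' t1 t2 by auto
        show ?thesis using place[OF zb1[folded b1_def] fin1 inj1[folded f1_def] st1[folded b1_def f1_def] t2S i2 m2 bd2] that by blast
      qed
      have r12: "r2 \<noteq> r1" using r2(1) by (auto simp: f1_def)
      define D where "D = \<kappa>2 r2"
      have D: "D = x t2 r2 - x t2 r1 * x t1 r2" "D = 1 \<or> D = -1"
        using r12 r2(2) by (auto simp: D_def \<kappa>2_def)
      have DD: "D * D = 1" using D(2) by auto
      define b2 where "b2 = b1(r2 := \<mu> t2)"
      define f2 where "f2 = f1(t2:=r2)"
      show ?thesis
      proof (cases "T - {t1, t2} = {}")
        case True
        hence "insert t2 (insert t1 S) = S \<union> T" using t1 t2 by auto
        thus ?thesis using zb2 inj2 st2 unfolding \<mu>_def by metis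
      next
        case False
        then obtain t3 where t3: "t3 \<in> T" "t3 \<noteq> t1" "t3 \<noteq> t2" by auto
        have T3: "T = {t1, t2, t3}"
        proof (rule ccontr)
          assume "T \<noteq> {t1, t2, t3}"
          then obtain t4 where "t4 \<in> T" "t4 \<notin> {t1,t2,t3}" using t1 t2 t3 by auto
          hence "{t1,t2,t3,t4} \<subseteq> T" using t1 t2 t3 by auto
          hence "card {t1,t2,t3,t4} \<le> card T" using finT by (rule card_mono[rotated])
          moreover have "card {t1,t2,t3,t4} = 4" using \<open>t4 \<notin> _\<close> t2 t3 by auto
          ultimately show False using cT by simp
        qed
        have t3S: "t3 \<notin> insert t2 (insert t1 S)" using t3 disj by auto
        have x3: "\<forall>i. x t3 i = 0 \<or> x t3 i = 1" using x01 t3 by auto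
        define \<alpha> where "\<alpha> = D * (x t3 r1 * x t2 r2 - x t2 r1 * x t3 r2)"
        define \<beta> where "\<beta> = D * (x t3 r2 - x t3 r1 * x t1 r2)"
        define \<kappa>3 where "\<kappa>3 i = (if i = r1 then \<alpha> else if i = r2 then \<beta>
             else x t3 i - \<alpha> * x t1 i - \<beta> * x t2 i)" for i
        have eq1: "\<alpha> * x t1 r1 + \<beta> * x t2 r1 = x t3 r1"
        proof -
          have "\<alpha> * x t1 r1 + \<beta> * x t2 r1 = D * D * x t3 r1"
            unfolding \<alpha>_def \<beta>_def x1r1 by (subst (2) D(1)) (simp add: algebra_simps)
          thus ?thesis using DD by simp
        qed
        have eq2: "\<alpha> * x t1 r2 + \<beta> * x t2 r2 = x t3 r2"
        proof -
          have "\<alpha> * x t1 r2 + \<beta> * x t2 r2 = D * D * x t3 r2"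
            unfolding \<alpha>_def \<beta>_def by (subst (3) D(1)) (simp add: algebra_simps)
          thus ?thesis using DD by simp
        qed
        have m3: "\<mu> t3 = LC b2 \<kappa>3"
        proof -
          have "LC b2 \<kappa>3 = LC B ((\<kappa>3(r2:=0))(r1:=0)) + (\<kappa>3(r2:=0)) r1 *s \<mu> t1 + \<kappa>3 r2 *s \<mu> t2"
            unfolding b2_def b1_def LC_upd ..
          also have "\<dots> = LC B (\<lambda>i. (\<kappa>3(r2:=0,r1:=0)) i + \<alpha> * x t1 i + \<beta> * x t2 i)"
            using r12 unfolding \<mu>_def LC_smult LC_add by (simp add: \<kappa>3_def)
          also have "\<dots> = \<mu> t3" unfolding \<mu>_def
            by (rule LC_cong) (use r12 eq1 eq2 in \<open>auto simp: \<kappa>3_def\<close>)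
          finally show ?thesis ..
        qed
        have fin2: "finite (insert t2 (insert t1 S))" using finS by simp
        have bd3: "-2 \<le> \<kappa>3 i \<and> \<kappa>3 i \<le> 2" if "i \<notin> f2 ` insert t2 (insert t1 S)" for i
        proof -
          have "i \<noteq> r1" "i \<noteq> r2" using that t2 by (auto simp: f2_def f1_def)
          hence "\<kappa>3 i = x t3 i - ((x t2 r2 - x t2 r1 * x t1 r2) * (x t3 r1 * x t2 r2 - x t2 r1 * x t3 r2)) * x t1 i
                 - ((x t2 r2 - x t2 r1 * x t1 r2) * (x t3 r2 - x t3 r1 * x t1 r2)) * x t2 i"
            unfolding \<kappa>3_def \<alpha>_def \<beta>_def D(1) by simp
          moreover have "x t2 r2 - x t2 r1 * x t1 r2 = 1 \<or> x t2 r2 - x t2 r1 * x t1 r2 = -1"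
            using D by simp
          note b3 = bound3[OF x1[rule_format, of r2] x2[rule_format, of r1] x2[rule_format, of r2]
              x3[rule_format, of r1] x3[rule_format, of r2] x1[rule_format, of i] x2[rule_format, of i]
              x3[rule_format, of i] this]
          ultimately show ?thesis using b3 by simp
        qed
        obtain r3 where zb3: "Z_basis (b2(r3 := \<mu> t3))" 
          and inj3: "inj_on (f2(t3:=r3)) (insert t3 (insert t2 (insert t1 S)))"
          and st3: "\<forall>v\<in>insert t3 (insert t2 (insert t1 S)). (b2(r3 := \<mu> t3)) ((f2(t3:=r3)) v) = \<mu> v"
        proof -
          have i3: "indep2 \<mu> (insert t3 (insert t2 (insert t1 S)))" using ind' t1 t2 t3 by auto
          show ?thesis using place[OF zb2[folded b2_def] fin2 inj2[folded f2_def] st2[folded b2_def f2_def] t3S i3 m3 bd3] that by blast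
        qed
        have "insert t3 (insert t2 (insert t1 S)) = S \<union> T" using T3 by auto
        thus ?thesis using zb3 inj3 st3 unfolding \<mu>_def by metis
      qed
    qed
  qed
qed

lemma build:
  fixes lam :: "'a \<Rightarrow> bit^'n::finite"
  assumes "finite A"
    and "\<forall>A'\<subseteq>A. \<forall>c::'a\<Rightarrow>bit. (\<Sum>v\<in>A'. c v *s lam v) = 0 \<longrightarrow> (\<forall>v\<in>A'. c v = 0)"
  shows "\<exists>B::'n \<Rightarrow> int^'n. \<exists>g. Z_basis B \<and> inj_on g A \<and> (\<forall>v\<in>A. red (B (g v)) = lam v)"
  using assms
proof (induction A rule: finite_induct)
  case empty
  show ?case using Z_basis_axis by blast
next
  case (insert a A)
  from insert.prems have pr: "\<forall>A'\<subseteq>A. \<forall>c::'a\<Rightarrow>bit. (\<Sum>v\<in>A'. c v *s lam v) = 0 \<longrightarrow> (\<forall>v\<in>A'. c v = 0)"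
    by blast
  obtain B g where zb: "Z_basis B" and inj: "inj_on g A" and bg: "\<forall>v\<in>A. red (B (g v)) = lam v"
    using insert.IH[OF pr] by blast
  obtain c where c: "lam a = (\<Sum>i\<in>UNIV. c i *s red (B i))" using Z2_span[OF zb] by blast
  have "\<exists>r. r \<notin> g ` A \<and> c r \<noteq> 0"
  proof (rule ccontr)
    assume "\<not> ?thesis"
    hence z: "\<And>r. r \<notin> g ` A \<Longrightarrow> c r = 0" by auto
    have "lam a = (\<Sum>i\<in>g ` A. c i *s red (B i))"
      unfolding c using z by (intro sum.mono_neutral_right) auto
    also have "\<dots> = (\<Sum>v\<in>A. c (g v) *s lam v)"
      using inj bg by (subst sum.reindex) auto
    finally have e1: "lam a = (\<Sum>v\<in>A. c (g v) *s lam v)" .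
    define d where "d v = (if v = a then 1 else c (g v))" for v
    have "(\<Sum>v\<in>insert a A. d v *s lam v) = lam a + (\<Sum>v\<in>A. d v *s lam v)"
      using insert.hyps by (simp add: d_def)
    also have "(\<Sum>v\<in>A. d v *s lam v) = (\<Sum>v\<in>A. c (g v) *s lam v)"
      using insert.hyps by (intro sum.cong) (auto simp: d_def)
    finally have "(\<Sum>v\<in>insert a A. d v *s lam v) = 0" using e1 by simp
    hence "d a = 0" using insert.prems by blast
    thus False by (simp add: d_def)
  qed
  then obtain r where r: "r \<notin> g ` A" "c r = 1" by auto
  define v' where "v' = LC B (\<lambda>i. lift (c i))"
  have zb': "Z_basis (B(r := v'))" using Z_basis_upd[OF zb v'_def] r by (simp add: lift_def)
  have "red v' = lam a" unfolding v'_def red_LC c by simp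
  hence "\<forall>v\<in>insert a A. red ((B(r := v')) ((g(a:=r)) v)) = lam v"
    using bg r(1) insert.hyps by (auto simp: image_iff)
  moreover have "inj_on (g(a:=r)) (insert a A)"
    using inj r(1) insert.hyps by (auto simp: inj_on_def image_iff)
  ultimately show ?case using zb' by blast
qed

theorem corollary9p3:
  fixes V :: "'a set" and K :: "'a set set" and lam :: "'a \<Rightarrow> bit ^ 'n::finite"
  assumes "fan_like_sphere V K TYPE('n)"
    and "card V \<le> CARD('n) + 3"
    and "nonsingular_Z2 K lam"
  shows "\<exists>\<mu> :: 'a \<Rightarrow> int ^ 'n. nonsingular_Z K \<mu> \<and> (\<forall>v\<in>V. mod2_reduction (\<mu> v) = lam v)"
proof -
  obtain w :: "'a \<Rightarrow> real^'n" where fl: "fan_like V K w"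
    using assms(1) unfolding fan_like_sphere_def by blast
  have sc: "simplicial_complex V K" using fl unfolding fan_like_def by blast
  have finV: "finite V" and subV: "\<And>\<sigma>. \<sigma> \<in> K \<Longrightarrow> \<sigma> \<subseteq> V"
    and subK: "\<And>\<sigma> \<tau>. \<sigma> \<in> K \<Longrightarrow> \<tau> \<subseteq> \<sigma> \<Longrightarrow> \<tau> \<in> K"
    using sc unfolding simplicial_complex_def by blast+
  obtain \<sigma>0 where s0: "\<sigma>0 \<in> K" "card \<sigma>0 \<ge> CARD('n)" using fan_big_face[OF fl] by blast
  have fins0: "finite \<sigma>0" using subV[OF s0(1)] finV finite_subset by blast
  have ns: "\<And>\<sigma> c. \<sigma> \<in> K \<Longrightarrow> (\<Sum>v\<in>\<sigma>. c v *s lam v) = 0 \<Longrightarrow> \<forall>v\<in>\<sigma>. c v = 0"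
    using assms(3) unfolding nonsingular_Z2_def by blast
  obtain B :: "'n \<Rightarrow> int^'n" and g where zb: "Z_basis B" and injg: "inj_on g \<sigma>0"
    and bg: "\<forall>v\<in>\<sigma>0. red (B (g v)) = lam v"
    using build[OF fins0, of lam] ns subK[OF s0(1)] by blast
  have "\<forall>v. \<exists>c. lam v = (\<Sum>i\<in>UNIV. c i *s red (B i))" using Z2_span[OF zb] by blast
  then obtain cv where cv: "\<And>v. lam v = (\<Sum>i\<in>UNIV. cv v i *s red (B i))" by metis
  define x where "x v = (if v \<in> \<sigma>0 then (\<lambda>i. if i = g v then 1 else 0) else (\<lambda>i. lift (cv v i)))" for v
  define \<mu> where "\<mu> v = LC B (x v)" for v
  have redmu: "red (\<mu> v) = lam v" for v
  proof (cases "v \<in> \<sigma>0")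
    case True
    thus ?thesis using bg by (simp add: \<mu>_def x_def LC_delta)
  next
    case False
    thus ?thesis unfolding \<mu>_def x_def red_LC by (simp add: cv[of v])
  qed
  have "nonsingular_Z K \<mu>"
    unfolding nonsingular_Z_def
  proof
    fix \<tau> assume tK: "\<tau> \<in> K"
    define S where "S = \<tau> \<inter> \<sigma>0"
    define T where "T = \<tau> - \<sigma>0"
    have fint: "finite \<tau>" using subV[OF tK] finV finite_subset by blast
    have ST: "S \<union> T = \<tau>" by (auto simp: S_def T_def)
    have cT: "card T \<le> 3"
    proof -
      have "T \<subseteq> V - \<sigma>0" using subV[OF tK] by (auto simp: T_def)
      hence "card T \<le> card (V - \<sigma>0)" using finV by (simp add: card_mono)
      also have "\<dots> = card V - card \<sigma>0" using subV[OF s0(1)] fins0 by (simp add: card_Diff_subset)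
      finally show ?thesis using assms(2) s0(2) by linarith
    qed
    have ind: "indep2 (\<lambda>v. LC B (x v)) (S \<union> T)"
      unfolding ST indep2_def using ns[OF tK] redmu[unfolded \<mu>_def] by simp
    obtain b f where "Z_basis b" "inj_on f (S \<union> T)" "\<forall>v\<in>S\<union>T. b (f v) = LC B (x v)"
      using core[OF zb _ _ _ _ _ _ cT ind, of g] fint injg
      by (auto simp: S_def T_def x_def lift_01 inj_on_subset)
    thus "\<exists>b f. Z_basis b \<and> inj_on f \<tau> \<and> (\<forall>v\<in>\<tau>. b (f v) = \<mu> v)"
      unfolding ST \<mu>_def by blast
  qed
  thus ?thesis using redmu by blast
qed

end
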